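(* Let $n\ge 1$ and $N\ge 1$ be integers, set $p=n(n-1)/2$, and let $X:=[\mathbb{C}^n]^N\times[\mathbb{C}^{p}]^N$. Write elements of $X$ as $\zeta=(\xi;\eta)$ with $\xi\in[\mathbb{C}^n]^N$ (deflection amplitudes) and $\eta\in[\mathbb{C}^p]^N$ (rotation amplitudes). Let $\mathbb{D}:\mathbb{R}^n\to \mathbb{C}^{X\times X}$ be a map with values in Hermitian matrices acting on $X$. For $\epsilon>0$ define the scaled matrices $\mathbb{D}_\epsilon(k)$, $k\in\mathbb{R}^n$, as the Hermitian matrices determined by $$\mathbb{D}_\epsilon(k)\,\zeta\cdot\zeta^*=\epsilon^{-2}\,\mathbb{D}(\epsilon k)\,(\xi;\epsilon\eta)\cdot(\xi^*;\epsilon\eta^* )\qquad\text{for all }\zeta=(\xi;\eta)\in X .$$ Let $L:\mathbb{C}^n\times\mathbb{C}^p\to X$ be the linear map $L(a;b)=\big(\tfrac1N a,\dots,\tfrac1N a;\ \tfrac1N b,\dots,\tfrac1N b\big)$ (each of the $N$ joint-class components receives $\tfrac1N a$ as deflection part and $\tfrac1N b$ as rotation part), and let $L^T$ denote its transpose. Assume that for every $k\in\mathbb{R}^n$ the matrix $\mathbb{D}_\epsilon(k)$ is invertible for all sufficiently small $\epsilon>0$, that the limit $M(k):=\lim_{\epsilon\to0}L^T\mathbb{D}_\epsilon^{-1}(k)L$ exists, and that $M(k)$ is invertible; define $\mathbb{D}_0(k):=M(k)^{-1}$. Then for every $\lambda>0$, every $k\in\mathbb{R}^n$ and every $\zeta_0=(\xi_0;\eta_0)\in\mathbb{C}^n\times\mathbb{C}^p$,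 $$\mathbb{D}_0(\lambda k)\,\zeta_0\cdot\zeta_0^*=\mathbb{D}_0(k)\,(\lambda\xi_0;\eta_0)\cdot(\lambda\xi_0^*;\eta_0^* ).$$
   Context: Notation: for a matrix $A$ and vectors $x,y$, $Ax\cdot y:=\sum_{j,i}A_{ji}x_i y_j$ (matrix product takes precedence over the dot product); $\zeta^*$ denotes the componentwise complex conjugate, so $A\zeta\cdot\zeta^*$ is the Hermitian quadratic form of $A$. $(x;y)$ denotes the concatenation (Cartesian product) of the arrays $x$ and $y$. In the paper's application, $\mathbb{D}(k)$ is the dynamical matrix (Fourier representation of the quadratic elastic energy) of a periodic beam lattice with $N$ joint classes, each joint carrying a deflection in $\mathbb{C}^n$ and a rotation in $\mathbb{C}^{n(n-1)/2}$, and $\mathbb{D}_0$ is the effective continuum dynamical matrix. *)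

theory Defs
  imports "HOL-Analysis.Analysis" "Jordan_Normal_Form.Schur_Decomposition"
begin

definition pdim :: "nat \<Rightarrow> nat" where
  "pdim n = n * (n - 1) div 2"

text \<open>Coordinates are ordered as
  xi (N blocks of n entries, class c occupying indices c*n..c*n+n-1), followed by
  eta (N blocks of p entries, class c occupying N*n + c*p .. N*n + c*p + p - 1).\<close>
definition xdim :: "nat \<Rightarrow> nat \<Rightarrow> nat" where
  "xdim n N = N * n + N * pdim n"

definition hermitian_mat :: "complex mat \<Rightarrow> bool" where
  "hermitian_mat A \<longleftrightarrow> square_mat A \<and> mat_adjoint A = A"

definition inv_mat :: "complex mat \<Rightarrow> complex mat" where
  "inv_mat A = (SOME B. inverts_mat A B \<and> inverts_mat B A)"

definition qform :: "complex mat \<Rightarrow> complex vec \<Rightarrow> complex" where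
  "qform A z = (\<Sum>i<dim_vec z. \<Sum>j<dim_vec z. A $$ (j, i) * z $ i * cnj (z $ j))"

definition scale_mat :: "nat \<Rightarrow> nat \<Rightarrow> real \<Rightarrow> complex mat" where
  "scale_mat n N \<epsilon> = mat (xdim n N) (xdim n N)
     (\<lambda>(i, j). if i = j then (if i < N * n then 1 else complex_of_real \<epsilon>) else 0)"

text \<open>The scaled matrix D_eps(k): the Hermitian matrix whose quadratic form is
  eps^-2 D(eps k)(xi; eps eta).(xi^*; eps eta^*), i.e. eps^-2 S D(eps k) S.\<close>
definition D_eps :: "(real vec \<Rightarrow> complex mat) \<Rightarrow> nat \<Rightarrow> nat \<Rightarrow> real \<Rightarrow> real vec \<Rightarrow> complex mat" where
  "D_eps D n N \<epsilon> k = complex_of_real (1 / \<epsilon>\<^sup>2) \<cdot>\<^sub>m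
     (scale_mat n N \<epsilon> * D (\<epsilon> \<cdot>\<^sub>v k) * scale_mat n N \<epsilon>)"

definition L_mat :: "nat \<Rightarrow> nat \<Rightarrow> complex mat" where
  "L_mat n N = mat (xdim n N) (n + pdim n)
     (\<lambda>(r, c). if r < N * n then (if c = r mod n then 1 / of_nat N else 0)
               else (if c = n + (r - N * n) mod pdim n then 1 / of_nat N else 0))"

end

theory Submission
  imports Defs
begin


definition dg :: "nat \<Rightarrow> (nat \<Rightarrow> complex) \<Rightarrow> complex mat" where
  "dg m f = mat m m (\<lambda>(i,j). if i = j then f i else 0)"

lemma dg_carrier[simp]: "dg m f \<in> carrier_mat m m"
  by (simp add: dg_def)

lemma dg_dims[simp]: "dim_row (dg m f) = m" "dim_col (dg m f) = m"
  by (simp_all add: dg_def)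

lemma sum_delta_l: "i < (m::nat) \<Longrightarrow> (\<Sum>l<m. (if i = l then c else 0) * g l) = c * (g i :: complex)"
proof -
  assume "i < m"
  have "\<And>l. (if i = l then c else 0) * g l = (if l = i then c * g i else 0)" by auto
  then have "(\<Sum>l<m. (if i = l then c else 0) * g l) = (\<Sum>l<m. if l = i then c * g i else 0)"
    by (simp only:)
  then show ?thesis using \<open>i < m\<close> by simp
qed

lemma sum_delta_r: "j < (m::nat) \<Longrightarrow> (\<Sum>l<m. g l * (if l = j then c l else 0)) = (g j :: complex) * c j"
proof -
  assume "j < m"
  have "\<And>l. g l * (if l = j then c l else 0) = (if l = j then g j * c j else 0)" by auto
  then have "(\<Sum>l<m. g l * (if l = j then c l else 0)) = (\<Sum>l<m. if l = j then g j * c j else 0)"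
    by (simp only:)
  then show ?thesis using \<open>j < m\<close> by simp
qed

lemma dg_mult_left:
  assumes "A \<in> carrier_mat m k" "i < m" "j < k"
  shows "(dg m f * A) $$ (i,j) = f i * A $$ (i,j)"
proof -
  have "(dg m f * A) $$ (i,j) = (\<Sum>l<m. if l = i then f i * A $$ (i,j) else 0)"
    using assms by (simp add: scalar_prod_def dg_def atLeast0LessThan sum_delta_l sum_delta_r)
  also have "\<dots> = f i * A $$ (i,j)"
    using assms(2) by simp
  finally show ?thesis .
qed

lemma dg_mult_right:
  assumes "A \<in> carrier_mat k m" "i < k" "j < m"
  shows "(A * dg m f) $$ (i,j) = A $$ (i,j) * f j"
proof -
  have "(A * dg m f) $$ (i,j) = (\<Sum>l<m. if l = j then A $$ (i,j) * f j else 0)"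
    using assms by (simp add: scalar_prod_def dg_def atLeast0LessThan sum_delta_l sum_delta_r)
  also have "\<dots> = A $$ (i,j) * f j"
    using assms(3) by simp
  finally show ?thesis .
qed

lemma dg_sandwich_entry:
  assumes A: "A \<in> carrier_mat m m" and ij: "i < m" "j < m"
  shows "(dg m f * A * dg m g) $$ (i,j) = f i * A $$ (i,j) * g j"
proof -
  have C: "dg m f * A \<in> carrier_mat m m" using A by (metis mult_carrier_mat dg_carrier)
  have "(dg m f * A * dg m g) $$ (i,j) = (dg m f * A) $$ (i,j) * g j"
    by (rule dg_mult_right[OF C ij])
  also have "(dg m f * A) $$ (i,j) = f i * A $$ (i,j)"
    by (rule dg_mult_left[OF A ij])
  finally show ?thesis .
qed

lemma dg_sandwich_smult_entry:
  assumes A: "A \<in> carrier_mat m m" and ij: "i < m" "j < m"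
  shows "(c \<cdot>\<^sub>m (dg m f * A * dg m g)) $$ (i,j) = c * (f i * A $$ (i,j) * g j)"
proof -
  have C: "dg m f * A * dg m g \<in> carrier_mat m m" using A by (metis mult_carrier_mat dg_carrier)
  have "(c \<cdot>\<^sub>m (dg m f * A * dg m g)) $$ (i,j) = c * (dg m f * A * dg m g) $$ (i,j)"
    using C ij by simp
  then show ?thesis using dg_sandwich_entry[OF A ij] by simp
qed

lemma inv_mat_props:
  assumes "invertible_mat A" "A \<in> carrier_mat m m"
  shows "inv_mat A \<in> carrier_mat m m \<and> A * inv_mat A = 1\<^sub>m m \<and> inv_mat A * A = 1\<^sub>m m"
proof -
  have "\<exists>B. inverts_mat A B \<and> inverts_mat B A" using assms unfolding invertible_mat_def by auto
  then have h: "inverts_mat A (inv_mat A) \<and> inverts_mat (inv_mat A) A"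
    unfolding inv_mat_def by (rule someI_ex)
  then have 1: "A * inv_mat A = 1\<^sub>m m" "inv_mat A * A = 1\<^sub>m (dim_row (inv_mat A))"
    using assms unfolding inverts_mat_def by auto
  have "dim_col (inv_mat A) = m" using 1(1) by (metis index_mult_mat(3) index_one_mat(3))
  moreover have "dim_row (inv_mat A) = m" using 1(2) assms(2)
    by (metis carrier_matD(2) index_mult_mat(3) index_one_mat(3))
  ultimately show ?thesis using 1 by auto
qed

lemma inv_mat_eq:
  assumes A: "A \<in> carrier_mat m m" and B: "B \<in> carrier_mat m m" and AB: "A * B = 1\<^sub>m m"
  shows "inv_mat A = B"
proof -
  have BA: "B * A = 1\<^sub>m m" using mat_mult_left_right_inverse[OF A B AB] .
  have inv: "invertible_mat A" using A B AB BA unfolding invertible_mat_def inverts_mat_def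
    by auto
  from inv_mat_props[OF inv A] have C: "inv_mat A \<in> carrier_mat m m"
    and AC: "A * inv_mat A = 1\<^sub>m m" by auto
  have "B = B * (A * inv_mat A)" using AC B by simp
  also have "\<dots> = (B * A) * inv_mat A" using A B C by simp
  also have "\<dots> = inv_mat A" using BA C by simp
  finally show ?thesis by simp
qed

lemma inv_sandwich:
  assumes A: "A \<in> carrier_mat m m" and iA: "invertible_mat A"
    and U: "U \<in> carrier_mat m m" and V: "V \<in> carrier_mat m m" and UV: "U * V = 1\<^sub>m m"
  shows "inv_mat (U * A * U) = V * inv_mat A * V"
proof (rule inv_mat_eq)
  from inv_mat_props[OF iA A] have C: "inv_mat A \<in> carrier_mat m m"
    and AC: "A * inv_mat A = 1\<^sub>m m" by auto
  show "U * A * U \<in> carrier_mat m m" using A U by simp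
  show "V * inv_mat A * V \<in> carrier_mat m m" using C V by simp
  have "(U * A * U) * (V * inv_mat A * V) = U * A * (U * V) * inv_mat A * V"
    using A U V C by (simp add: assoc_mult_mat[of _ m m _ m _ m])
  also have "\<dots> = U * (A * inv_mat A) * V" using A U V C UV by simp
  also have "\<dots> = 1\<^sub>m m" using AC U V UV by simp
  finally show "(U * A * U) * (V * inv_mat A * V) = 1\<^sub>m m" .
qed



lemma filterlim_scale_right0:
  assumes "(lam::real) > 0"
  shows "filterlim (\<lambda>e. lam * e) (at_right 0) (at_right 0)"
proof -
  have "((\<lambda>e. lam * e) \<longlongrightarrow> 0) (at_right 0)"
    by (intro tendsto_mult_right_zero tendsto_ident_at)
  moreover have "eventually (\<lambda>e. lam * e \<in> {0<..} \<and> lam * e \<noteq> 0) (at_right (0::real))"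
    using eventually_at_right_less[of 0] assms
    by (auto elim!: eventually_mono)
  ultimately show ?thesis by (simp add: filterlim_at)
qed

lemma L_diag_comm:
  assumes "r < xdim n N" "c < n + pdim n"
  shows "L_mat n N $$ (r,c) * (if r < N * n then a else b) = L_mat n N $$ (r,c) * (if c < n then a else b)"
proof -
  have np: "n > 0" if "r < N * n" using that by (cases n) auto
  show ?thesis using assms np by (auto simp: L_mat_def)
qed
theorem mainTheorem1:
  fixes n N :: nat
    and D :: "real vec \<Rightarrow> complex mat"
    and M :: "real vec \<Rightarrow> complex mat"
    and lam :: real and k :: "real vec" and \<zeta>0 :: "complex vec"
  assumes n_pos: "n \<ge> 1" and N_pos: "N \<ge> 1"
    and D_carrier: "\<And>q. dim_vec q = n \<Longrightarrow> D q \<in> carrier_mat (xdim n N) (xdim n N)"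
    and D_herm: "\<And>q. dim_vec q = n \<Longrightarrow> hermitian_mat (D q)"
    and D_eps_inv: "\<And>q. dim_vec q = n \<Longrightarrow>
           eventually (\<lambda>\<epsilon>. invertible_mat (D_eps D n N \<epsilon> q)) (at_right 0)"
    and M_carrier: "\<And>q. dim_vec q = n \<Longrightarrow> M q \<in> carrier_mat (n + pdim n) (n + pdim n)"
    and M_lim: "\<And>q i j. dim_vec q = n \<Longrightarrow> i < n + pdim n \<Longrightarrow> j < n + pdim n \<Longrightarrow>
           ((\<lambda>\<epsilon>. (transpose_mat (L_mat n N) * inv_mat (D_eps D n N \<epsilon> q) * L_mat n N) $$ (i, j))
              \<longlongrightarrow> M q $$ (i, j)) (at_right 0)"
    and M_inv: "\<And>q. dim_vec q = n \<Longrightarrow> invertible_mat (M q)"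
    and lam_pos: "lam > 0" and k_dim: "dim_vec k = n" and z_dim: "dim_vec \<zeta>0 = n + pdim n"
  shows "qform (inv_mat (M (lam \<cdot>\<^sub>v k))) \<zeta>0 =
         qform (inv_mat (M k))
           (vec (n + pdim n) (\<lambda>i. if i < n then complex_of_real lam * \<zeta>0 $ i else \<zeta>0 $ i))"
proof -
  define X where "X = xdim n N"
  define P where "P = n + pdim n"
  define ui :: "nat \<Rightarrow> complex" where "ui i = (if i < N * n then complex_of_real (1/lam) else 1)" for i
  define u :: "nat \<Rightarrow> complex" where "u i = (if i < N * n then complex_of_real lam else 1)" for i
  define vi :: "nat \<Rightarrow> complex" where "vi i = (if i < n then complex_of_real (1/lam) else 1)" for i
  define v :: "nat \<Rightarrow> complex" where "v i = (if i < n then complex_of_real lam else 1)" for i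
  define Ui where "Ui = dg X ui"
  define U where "U = dg X u"
  define Vi where "Vi = dg P vi"
  define V where "V = dg P v"
  define L where "L = L_mat n N"
  have lam0: "complex_of_real lam \<noteq> 0" using lam_pos by simp
  have LC: "L \<in> carrier_mat X P" by (simp add: L_def L_mat_def X_def P_def)
  have UUi: "U * Ui = 1\<^sub>m X"
  proof (rule eq_matI)
    fix i j assume "i < dim_row (1\<^sub>m X :: complex mat)" "j < dim_col (1\<^sub>m X :: complex mat)"
    then have ij: "i < X" "j < X" by auto
    have "(U * Ui) $$ (i,j) = u i * Ui $$ (i,j)" unfolding U_def
      by (rule dg_mult_left) (use ij in \<open>auto simp: Ui_def\<close>)
    moreover have "Ui $$ (i,j) = (if i = j then ui i else 0)" using ij by (simp add: Ui_def dg_def)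
    moreover have "u i * ui i = 1" using lam_pos by (simp add: u_def ui_def)
    ultimately show "(U * Ui) $$ (i,j) = 1\<^sub>m X $$ (i,j)" using ij by auto
  qed (auto simp: U_def Ui_def)
  have ViV: "Vi * V = 1\<^sub>m P"
  proof (rule eq_matI)
    fix i j assume "i < dim_row (1\<^sub>m P :: complex mat)" "j < dim_col (1\<^sub>m P :: complex mat)"
    then have ij: "i < P" "j < P" by auto
    have "(Vi * V) $$ (i,j) = vi i * V $$ (i,j)" unfolding Vi_def
      by (rule dg_mult_left) (use ij in \<open>auto simp: V_def\<close>)
    moreover have "V $$ (i,j) = (if i = j then v i else 0)" using ij by (simp add: V_def dg_def)
    moreover have "vi i * v i = 1" using lam_pos by (simp add: v_def vi_def)
    ultimately show "(Vi * V) $$ (i,j) = 1\<^sub>m P $$ (i,j)" using ij by auto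
  qed (auto simp: V_def Vi_def)
  have scale_dg: "scale_mat n N e = dg X (\<lambda>i. if i < N * n then 1 else complex_of_real e)" for e
    by (simp add: scale_mat_def dg_def X_def)
  have Deps_C: "D_eps D n N e q \<in> carrier_mat X X" if "dim_vec q = n" for e q
  proof -
    have DC: "D (e \<cdot>\<^sub>v q) \<in> carrier_mat X X" using D_carrier[of "e \<cdot>\<^sub>v q"] that by (simp add: X_def)
    show ?thesis unfolding D_eps_def scale_dg
      by (rule smult_carrier_mat[OF mult_carrier_mat[OF mult_carrier_mat[OF dg_carrier DC] dg_carrier]])
  qed
  have kd0: "dim_vec (lam \<cdot>\<^sub>v k) = n" using k_dim by simp
  have scale: "D_eps D n N e (lam \<cdot>\<^sub>v k) = U * D_eps D n N (lam * e) k * U" if e0: "e > 0" for e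
  proof -
    have vq: "e \<cdot>\<^sub>v (lam \<cdot>\<^sub>v k) = (lam * e) \<cdot>\<^sub>v k" by (metis smult_smult_assoc mult.commute)
    define A where "A = D ((lam * e) \<cdot>\<^sub>v k)"
    have AC: "A \<in> carrier_mat X X" unfolding A_def X_def using D_carrier[of "(lam * e) \<cdot>\<^sub>v k"] k_dim by simp
    have BC: "D_eps D n N (lam * e) k \<in> carrier_mat X X" using Deps_C k_dim by simp
    show ?thesis
    proof (rule eq_matI)
      fix i j assume i: "i < dim_row (U * D_eps D n N (lam * e) k * U)"
        and j: "j < dim_col (U * D_eps D n N (lam * e) k * U)"
      have iX: "i < X" and jX: "j < X" using i j BC by (auto simp: U_def)
      have l: "D_eps D n N e (lam \<cdot>\<^sub>v k) $$ (i,j) = complex_of_real (1 / e\<^sup>2) *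
        ((if i < N * n then 1 else complex_of_real e) * A $$ (i,j) * (if j < N * n then 1 else complex_of_real e))"
        unfolding D_eps_def scale_dg vq A_def[symmetric]
        by (rule dg_sandwich_smult_entry[OF AC iX jX])
      have r: "(U * D_eps D n N (lam * e) k * U) $$ (i,j) = u i * (complex_of_real (1 / (lam*e)\<^sup>2) *
        ((if i < N * n then 1 else complex_of_real (lam*e)) * A $$ (i,j) * (if j < N * n then 1 else complex_of_real (lam*e)))) * u j"
        unfolding U_def dg_sandwich_entry[OF BC iX jX]
        unfolding D_eps_def scale_dg A_def[symmetric] dg_sandwich_smult_entry[OF AC iX jX] ..
      define ce where "ce = complex_of_real e"
      define cl where "cl = complex_of_real lam"
      have ce0: "ce \<noteq> 0" using e0 by (simp add: ce_def)
      have cl0: "cl \<noteq> 0" using lam_pos by (simp add: cl_def)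
      have c1: "complex_of_real (1 / e\<^sup>2) = 1 / (ce * ce)" by (simp add: ce_def power2_eq_square)
      have c2: "complex_of_real (1 / (lam*e)\<^sup>2) = 1 / (cl * ce * (cl * ce))"
        by (simp add: ce_def cl_def power2_eq_square)
      have c3: "complex_of_real (lam*e) = cl * ce" by (simp add: ce_def cl_def)
      show "D_eps D n N e (lam \<cdot>\<^sub>v k) $$ (i,j) = (U * D_eps D n N (lam * e) k * U) $$ (i,j)"
        unfolding l r u_def c1 c2 c3 ce_def[symmetric] cl_def[symmetric]
        using ce0 cl0 by (cases "i < N * n"; cases "j < N * n"; simp add: field_simps)
    next
      show "dim_row (D_eps D n N e (lam \<cdot>\<^sub>v k)) = dim_row (U * D_eps D n N (lam * e) k * U)"
        using carrier_matD[OF Deps_C[OF kd0, of e]] BC by (simp add: U_def)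
      show "dim_col (D_eps D n N e (lam \<cdot>\<^sub>v k)) = dim_col (U * D_eps D n N (lam * e) k * U)"
        using carrier_matD[OF Deps_C[OF kd0, of e]] BC by (simp add: U_def)
    qed
  qed
  have Lcomm: "L $$ (r,c) * ui r = L $$ (r,c) * vi c" if "r < X" "c < P" for r c
    using L_diag_comm[of r n N c "complex_of_real (1/lam)" 1] that
    unfolding ui_def vi_def L_def X_def P_def .
  have UiC: "Ui \<in> carrier_mat X X" by (simp add: Ui_def)
  have ViC: "Vi \<in> carrier_mat P P" by (simp add: Vi_def)
  have UiL: "Ui * L = L * Vi"
  proof (rule eq_matI)
    fix r c assume "r < dim_row (L * Vi)" "c < dim_col (L * Vi)"
    then have r: "r < X" and c: "c < P" using LC by (auto simp: Vi_def)
    have e1: "(Ui * L) $$ (r,c) = ui r * L $$ (r,c)" unfolding Ui_def by (rule dg_mult_left[OF LC r c])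
    have e2: "(L * Vi) $$ (r,c) = L $$ (r,c) * vi c" unfolding Vi_def by (rule dg_mult_right[OF LC r c])
    show "(Ui * L) $$ (r,c) = (L * Vi) $$ (r,c)"
      unfolding e1 e2 using Lcomm[OF r c] by (simp add: mult.commute)
  qed (use LC UiC ViC in auto)
  have LtC: "transpose_mat L \<in> carrier_mat P X" using LC by simp
  have LtUi: "transpose_mat L * Ui = Vi * transpose_mat L"
  proof (rule eq_matI)
    fix c r assume "c < dim_row (Vi * transpose_mat L)" "r < dim_col (Vi * transpose_mat L)"
    then have r: "r < X" and c: "c < P" using LC by (auto simp: Vi_def)
    have e1: "(transpose_mat L * Ui) $$ (c,r) = transpose_mat L $$ (c,r) * ui r"
      unfolding Ui_def by (rule dg_mult_right[OF LtC c r])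
    have e2: "(Vi * transpose_mat L) $$ (c,r) = vi c * transpose_mat L $$ (c,r)"
      unfolding Vi_def by (rule dg_mult_left[OF LtC c r])
    have e3: "transpose_mat L $$ (c,r) = L $$ (r,c)" using LC r c by simp
    show "(transpose_mat L * Ui) $$ (c,r) = (Vi * transpose_mat L) $$ (c,r)"
      unfolding e1 e2 e3 using Lcomm[OF r c] by (simp add: mult.commute)
  qed (use LC UiC ViC in auto)
  have sandwich: "transpose_mat L * (Ui * B * Ui) * L = Vi * (transpose_mat L * B * L) * Vi"
    if BC: "B \<in> carrier_mat X X" for B
  proof -
    have LtC: "transpose_mat L \<in> carrier_mat P X" using LC by simp
    have UiC: "Ui \<in> carrier_mat X X" by (simp add: Ui_def)
    have ViC: "Vi \<in> carrier_mat P P" by (simp add: Vi_def)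
    have "transpose_mat L * (Ui * B * Ui) * L = (transpose_mat L * Ui) * B * (Ui * L)"
      using LtC UiC BC LC by (simp add: assoc_mult_mat[of _ P P _ P _ P] assoc_mult_mat[of _ P P _ P _ X] assoc_mult_mat[of _ P P _ X _ P] assoc_mult_mat[of _ P P _ X _ X] assoc_mult_mat[of _ P X _ P _ P] assoc_mult_mat[of _ P X _ P _ X] assoc_mult_mat[of _ P X _ X _ P] assoc_mult_mat[of _ P X _ X _ X] assoc_mult_mat[of _ X P _ P _ P] assoc_mult_mat[of _ X P _ P _ X] assoc_mult_mat[of _ X P _ X _ P] assoc_mult_mat[of _ X P _ X _ X] assoc_mult_mat[of _ X X _ P _ P] assoc_mult_mat[of _ X X _ P _ X] assoc_mult_mat[of _ X X _ X _ P] assoc_mult_mat[of _ X X _ X _ X])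
    also have "\<dots> = Vi * transpose_mat L * B * (L * Vi)" by (simp add: UiL LtUi)
    also have "\<dots> = Vi * (transpose_mat L * B * L) * Vi"
      using LtC ViC BC LC by (simp add: assoc_mult_mat[of _ P P _ P _ P] assoc_mult_mat[of _ P P _ P _ X] assoc_mult_mat[of _ P P _ X _ P] assoc_mult_mat[of _ P P _ X _ X] assoc_mult_mat[of _ P X _ P _ P] assoc_mult_mat[of _ P X _ P _ X] assoc_mult_mat[of _ P X _ X _ P] assoc_mult_mat[of _ P X _ X _ X] assoc_mult_mat[of _ X P _ P _ P] assoc_mult_mat[of _ X P _ P _ X] assoc_mult_mat[of _ X P _ X _ P] assoc_mult_mat[of _ X P _ X _ X] assoc_mult_mat[of _ X X _ P _ P] assoc_mult_mat[of _ X X _ P _ X] assoc_mult_mat[of _ X X _ X _ P] assoc_mult_mat[of _ X X _ X _ X])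
    finally show ?thesis .
  qed
  have flim: "filterlim (\<lambda>e. lam * e) (at_right 0) (at_right 0)"
    using filterlim_scale_right0[OF lam_pos] .
  have Mrel: "M (lam \<cdot>\<^sub>v k) $$ (i,j) = vi i * vi j * M k $$ (i,j)" if i: "i < P" and j: "j < P" for i j
  proof -
    define g where "g e = (transpose_mat L * inv_mat (D_eps D n N e k) * L) $$ (i,j)" for e
    have glim: "(g \<longlongrightarrow> M k $$ (i,j)) (at_right 0)"
      unfolding g_def L_def using M_lim[OF k_dim] i j by (simp add: P_def)
    have glim2: "((\<lambda>e. g (lam * e)) \<longlongrightarrow> M k $$ (i,j)) (at_right 0)"
      using filterlim_compose[OF glim flim] .
    have ev1: "eventually (\<lambda>e. invertible_mat (D_eps D n N (lam * e) k)) (at_right 0)"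
      using D_eps_inv[OF k_dim] flim unfolding filterlim_iff by blast
    have ev2: "eventually (\<lambda>e. (0::real) < e) (at_right 0)" by (rule eventually_at_right_less)
    have ev: "eventually (\<lambda>e. (transpose_mat L * inv_mat (D_eps D n N e (lam \<cdot>\<^sub>v k)) * L) $$ (i,j)
                = vi i * vi j * g (lam * e)) (at_right 0)"
      using ev1 ev2
    proof eventually_elim
      case (elim e)
      define B where "B = D_eps D n N (lam * e) k"
      have BC: "B \<in> carrier_mat X X" unfolding B_def using Deps_C k_dim by simp
      have UC: "U \<in> carrier_mat X X" "Ui \<in> carrier_mat X X" by (auto simp: U_def Ui_def)
      have ieq: "inv_mat (D_eps D n N e (lam \<cdot>\<^sub>v k)) = Ui * inv_mat B * Ui"
        unfolding scale[OF elim(2)] B_def[symmetric]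
        using inv_sandwich[OF BC _ UC UUi] elim(1) B_def by simp
      have iBC: "inv_mat B \<in> carrier_mat X X"
        using inv_mat_props[OF _ BC] elim(1) B_def by simp
      have CC: "transpose_mat L * inv_mat B * L \<in> carrier_mat P P" using iBC LC by simp
      show ?case
        unfolding ieq sandwich[OF iBC] Vi_def dg_sandwich_entry[OF CC i j]
        by (simp add: g_def B_def mult_ac)
    qed
    have lim1: "((\<lambda>e. (transpose_mat L * inv_mat (D_eps D n N e (lam \<cdot>\<^sub>v k)) * L) $$ (i,j))
           \<longlongrightarrow> vi i * vi j * M k $$ (i,j)) (at_right 0)"
      using tendsto_cong[OF ev] tendsto_mult_left[OF glim2, of "vi i * vi j"] by simp
    have kd: "dim_vec (lam \<cdot>\<^sub>v k) = n" using k_dim by simp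
    have lim2: "((\<lambda>e. (transpose_mat L * inv_mat (D_eps D n N e (lam \<cdot>\<^sub>v k)) * L) $$ (i,j))
           \<longlongrightarrow> M (lam \<cdot>\<^sub>v k) $$ (i,j)) (at_right 0)"
      unfolding L_def using M_lim[OF kd] i j by (simp add: P_def)
    show ?thesis using tendsto_unique[OF _ lim2 lim1] by simp
  qed
  have MkC: "M k \<in> carrier_mat P P" using M_carrier[OF k_dim] by (simp add: P_def)
  have MlC: "M (lam \<cdot>\<^sub>v k) \<in> carrier_mat P P" using M_carrier k_dim by (simp add: P_def)
  have Meq: "M (lam \<cdot>\<^sub>v k) = Vi * M k * Vi"
  proof (rule eq_matI)
    fix i j assume "i < dim_row (Vi * M k * Vi)" "j < dim_col (Vi * M k * Vi)"
    then have ij: "i < P" "j < P" using MkC by (auto simp: Vi_def)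
    show "M (lam \<cdot>\<^sub>v k) $$ (i,j) = (Vi * M k * Vi) $$ (i,j)"
      unfolding Vi_def dg_sandwich_entry[OF MkC ij] Mrel[OF ij] by (simp add: mult_ac)
  qed (use MkC MlC in \<open>auto simp: Vi_def\<close>)
  have VC: "V \<in> carrier_mat P P" "Vi \<in> carrier_mat P P" by (auto simp: V_def Vi_def)
  have inveq: "inv_mat (M (lam \<cdot>\<^sub>v k)) = V * inv_mat (M k) * V"
    unfolding Meq using inv_sandwich[OF MkC M_inv[OF k_dim] VC(2) VC(1) ViV] .
  have iMC: "inv_mat (M k) \<in> carrier_mat P P" using inv_mat_props[OF M_inv[OF k_dim] MkC] by simp
  have ent: "inv_mat (M (lam \<cdot>\<^sub>v k)) $$ (j,i) = v j * inv_mat (M k) $$ (j,i) * v i"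
    if "i < P" "j < P" for i j
    unfolding inveq V_def using dg_sandwich_entry[OF iMC that(2) that(1)] .
  have cv: "cnj (v j) = v j" for j by (simp add: v_def)
  show ?thesis
    unfolding qform_def
    apply (simp add: z_dim P_def[symmetric])
    apply (rule sum.cong[OF refl])
    apply (rule sum.cong[OF refl])
    using ent z_dim cv by (auto simp: P_def v_def)
qed

end
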